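(* Let $M$ be a monoid and let $X$ be a finite $M$-partial order. Then (i) $\mathrm{Fr}(X)$, with the action $ax=\{ai : i\in x\}$ for $a\in M$, $x\in \mathrm{Fr}(X)$, is a strong $M$-partial order; and (ii) the function $\pi\colon \mathrm{Fr}(X)\to X$ given by $\pi(x)=\max x$ is an epimorphism of $M$-partial orders.
   Context: A monoid acting on a set acts with the identity acting as the identity map. An $M$-partial order is a set $X$ with an action of $M$ and a partial order $\leq_X$ such that $x\leq_X y$ implies $ax\leq_X ay$. It is strong if for all $y\in X$, $a\in M$: $\{ax : x\leq_X y\}=\{x\in X : x\leq_X ay\}$. For $M$-partial orders $X,Y$, a map $f\colon X\to Y$ is an epimorphism if it is onto, $M$-equivariant, and $\leq_Y$ is the image of $\leq_X$ under $f\times f$ (i.e. $y\leq_Y y'$ iff there are $x\leq_X x'$ with $f(x)=y$, $f(x')=y'$). For a finite partial order $X$, $\mathrm{Fr}(X)$ is the set of non-empty subsets of $X$ linearly ordered by $\leq_X$, ordered by: $x\leq_{\mathrm{Fr}(X)} y$ iff $x\subseteq y$ and $i<_X j$ for all $i\in x$ and $j\in y\setminus x$. *)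

theory Defs
  imports Main
begin

definition monoid_action :: "'x set \<Rightarrow> ('m::monoid_mult \<Rightarrow> 'x \<Rightarrow> 'x) \<Rightarrow> bool" where
  "monoid_action X act \<longleftrightarrow>
     (\<forall>a. \<forall>x\<in>X. act a x \<in> X) \<and>
     (\<forall>x\<in>X. act 1 x = x) \<and>
     (\<forall>a b. \<forall>x\<in>X. act (a * b) x = act a (act b x))"

definition partial_order_rel :: "'x set \<Rightarrow> 'x rel \<Rightarrow> bool" where
  "partial_order_rel X r \<longleftrightarrow>
     r \<subseteq> X \<times> X \<and>
     (\<forall>x\<in>X. (x, x) \<in> r) \<and>
     (\<forall>x y. (x, y) \<in> r \<and> (y, x) \<in> r \<longrightarrow> x = y) \<and>
     (\<forall>x y z. (x, y) \<in> r \<and> (y, z) \<in> r \<longrightarrow> (x, z) \<in> r)"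

definition M_partial_order :: "'x set \<Rightarrow> 'x rel \<Rightarrow> ('m::monoid_mult \<Rightarrow> 'x \<Rightarrow> 'x) \<Rightarrow> bool" where
  "M_partial_order X r act \<longleftrightarrow>
     monoid_action X act \<and> partial_order_rel X r \<and>
     (\<forall>a x y. (x, y) \<in> r \<longrightarrow> (act a x, act a y) \<in> r)"

definition strong_M_partial_order :: "'x set \<Rightarrow> 'x rel \<Rightarrow> ('m::monoid_mult \<Rightarrow> 'x \<Rightarrow> 'x) \<Rightarrow> bool" where
  "strong_M_partial_order X r act \<longleftrightarrow>
     M_partial_order X r act \<and>
     (\<forall>y\<in>X. \<forall>a. {act a x | x. (x, y) \<in> r} = {x \<in> X. (x, act a y) \<in> r})"

definition M_epimorphism ::
  "'x set \<Rightarrow> 'x rel \<Rightarrow> ('m::monoid_mult \<Rightarrow> 'x \<Rightarrow> 'x) \<Rightarrow>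
   'y set \<Rightarrow> 'y rel \<Rightarrow> ('m \<Rightarrow> 'y \<Rightarrow> 'y) \<Rightarrow> ('x \<Rightarrow> 'y) \<Rightarrow> bool" where
  "M_epimorphism X rX actX Y rY actY f \<longleftrightarrow>
     M_partial_order X rX actX \<and> M_partial_order Y rY actY \<and>
     f ` X = Y \<and>
     (\<forall>a. \<forall>x\<in>X. f (actX a x) = actY a (f x)) \<and>
     rY = (\<lambda>(x, x'). (f x, f x')) ` rX"

definition Fr :: "'x set \<Rightarrow> 'x rel \<Rightarrow> 'x set set" where
  "Fr X r = {x. x \<subseteq> X \<and> x \<noteq> {} \<and> (\<forall>i\<in>x. \<forall>j\<in>x. (i, j) \<in> r \<or> (j, i) \<in> r)}"

definition Fr_rel :: "'x set \<Rightarrow> 'x rel \<Rightarrow> 'x set rel" where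
  "Fr_rel X r = {(x, y). x \<in> Fr X r \<and> y \<in> Fr X r \<and> x \<subseteq> y \<and>
                  (\<forall>i\<in>x. \<forall>j\<in>y - x. (i, j) \<in> r \<and> i \<noteq> j)}"

definition Fr_act :: "('m \<Rightarrow> 'x \<Rightarrow> 'x) \<Rightarrow> 'm \<Rightarrow> 'x set \<Rightarrow> 'x set" where
  "Fr_act act a x = act a ` x"

definition Fr_max :: "'x rel \<Rightarrow> 'x set \<Rightarrow> 'x" where
  "Fr_max r x = (THE m. m \<in> x \<and> (\<forall>i\<in>x. (i, m) \<in> r))"

end

theory Submission
  imports Defs
begin

lemma chain_max_ex:
  assumes po: "partial_order_rel X r" and fin: "finite x" and ne: "x \<noteq> {}"
    and ch: "\<forall>i\<in>x. \<forall>j\<in>x. (i, j) \<in> r \<or> (j, i) \<in> r"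
  shows "\<exists>m\<in>x. \<forall>i\<in>x. (i, m) \<in> r"
  using fin ne ch
proof (induction x rule: finite_ne_induct)
  case (singleton a)
  then show ?case by auto
next
  case (insert a F)
  then obtain m where m: "m \<in> F" "\<forall>i\<in>F. (i, m) \<in> r" by auto
  have tr: "\<And>x y z. (x, y) \<in> r \<Longrightarrow> (y, z) \<in> r \<Longrightarrow> (x, z) \<in> r"
    using po unfolding partial_order_rel_def by blast
  have "(m, a) \<in> r \<or> (a, m) \<in> r" using insert.prems m by auto
  then show ?case
  proof
    assume "(m, a) \<in> r"
    then show ?thesis proof (intro bexI[of _ a] ballI)
      have aa: "(a, a) \<in> r" using insert.prems by auto
      fix i assume "i \<in> insert a F"
      then show "(i, a) \<in> r" using aa m tr \<open>(m, a) \<in> r\<close> by blast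
    qed auto
  qed (use m in auto)
qed

lemma Fr_max_eq:
  assumes po: "partial_order_rel X r" and "m \<in> x" "\<forall>i\<in>x. (i, m) \<in> r"
  shows "Fr_max r x = m"
  unfolding Fr_max_def
proof (rule the_equality)
  show "m \<in> x \<and> (\<forall>i\<in>x. (i, m) \<in> r)" using assms by auto
next
  fix n assume "n \<in> x \<and> (\<forall>i\<in>x. (i, n) \<in> r)"
  then have "(m, n) \<in> r" "(n, m) \<in> r" using assms by auto
  then show "n = m" using po unfolding partial_order_rel_def by blast
qed

lemma Fr_max_prop:
  assumes po: "partial_order_rel X r" and fin: "finite X" and x: "x \<in> Fr X r"
  shows "Fr_max r x \<in> x \<and> (\<forall>i\<in>x. (i, Fr_max r x) \<in> r)"
proof -
  have "x \<subseteq> X" using x unfolding Fr_def by auto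
  then have "finite x" using fin by (rule finite_subset)
  moreover have "x \<noteq> {}" "\<forall>i\<in>x. \<forall>j\<in>x. (i, j) \<in> r \<or> (j, i) \<in> r"
    using x unfolding Fr_def by auto
  ultimately obtain m where "m \<in> x" "\<forall>i\<in>x. (i, m) \<in> r"
    using chain_max_ex[OF po] by blast
  then show ?thesis using Fr_max_eq[OF po, of m x] by simp
qed

theorem lemma2p2:
  fixes X :: "'x set" and r :: "'x rel" and act :: "'m::monoid_mult \<Rightarrow> 'x \<Rightarrow> 'x"
  assumes "finite X"
    and "M_partial_order X r act"
  shows "strong_M_partial_order (Fr X r) (Fr_rel X r) (Fr_act act)
       \<and> M_epimorphism (Fr X r) (Fr_rel X r) (Fr_act act) X r act (Fr_max r)"
proof -
  have ma: "monoid_action X act" and po: "partial_order_rel X r"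
    and mono: "\<And>a x y. (x, y) \<in> r \<Longrightarrow> (act a x, act a y) \<in> r"
    using assms(2) unfolding M_partial_order_def by auto
  have sub: "r \<subseteq> X \<times> X" and refl: "\<And>x. x \<in> X \<Longrightarrow> (x, x) \<in> r"
    and anti: "\<And>x y. (x, y) \<in> r \<Longrightarrow> (y, x) \<in> r \<Longrightarrow> x = y"
    and tr: "\<And>x y z. (x, y) \<in> r \<Longrightarrow> (y, z) \<in> r \<Longrightarrow> (x, z) \<in> r"
    using po unfolding partial_order_rel_def by blast+
  have actX: "\<And>a x. x \<in> X \<Longrightarrow> act a x \<in> X" and act1: "\<And>x. x \<in> X \<Longrightarrow> act 1 x = x"
    and actm: "\<And>a b x. x \<in> X \<Longrightarrow> act (a * b) x = act a (act b x)"
    using ma unfolding monoid_action_def by auto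
  have FrA: "Fr_act act a x \<in> Fr X r" if "x \<in> Fr X r" for a x
  proof -
    have "x \<subseteq> X" "x \<noteq> {}" "\<forall>i\<in>x. \<forall>j\<in>x. (i, j) \<in> r \<or> (j, i) \<in> r"
      using that unfolding Fr_def by auto
    then show ?thesis unfolding Fr_def Fr_act_def using actX mono by blast
  qed
  have maFr: "monoid_action (Fr X r) (Fr_act act)"
    unfolding monoid_action_def
  proof (intro conjI ballI allI)
    fix x assume x: "x \<in> Fr X r"
    show "Fr_act act 1 x = x" using x act1 unfolding Fr_def Fr_act_def by (auto simp: subset_iff image_iff)
    fix a b
    show "Fr_act act (a * b) x = Fr_act act a (Fr_act act b x)"
      using x actm unfolding Fr_def Fr_act_def by (auto simp: image_image subset_iff)
  qed (use FrA in auto)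
  have trFr: "(x, z) \<in> Fr_rel X r" if a: "(x, y) \<in> Fr_rel X r" "(y, z) \<in> Fr_rel X r" for x y z
  proof -
    have b: "x \<in> Fr X r" "z \<in> Fr X r" "x \<subseteq> y" "y \<subseteq> z"
      "\<forall>i\<in>x. \<forall>j\<in>y - x. (i, j) \<in> r \<and> i \<noteq> j"
      "\<forall>i\<in>y. \<forall>j\<in>z - y. (i, j) \<in> r \<and> i \<noteq> j"
      using a unfolding Fr_rel_def by auto
    have "\<forall>i\<in>x. \<forall>j\<in>z - x. (i, j) \<in> r \<and> i \<noteq> j"
    proof (intro ballI)
      fix i j assume "i \<in> x" "j \<in> z - x"
      then show "(i, j) \<in> r \<and> i \<noteq> j" using b by (cases "j \<in> y") auto
    qed
    then show ?thesis using b unfolding Fr_rel_def by auto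
  qed
  have poFr: "partial_order_rel (Fr X r) (Fr_rel X r)"
    unfolding partial_order_rel_def
  proof (intro conjI)
    show "Fr_rel X r \<subseteq> Fr X r \<times> Fr X r" unfolding Fr_rel_def by auto
    show "\<forall>x\<in>Fr X r. (x, x) \<in> Fr_rel X r" unfolding Fr_rel_def by auto
    show "\<forall>x y. (x, y) \<in> Fr_rel X r \<and> (y, x) \<in> Fr_rel X r \<longrightarrow> x = y" unfolding Fr_rel_def by auto
    show "\<forall>x y z. (x, y) \<in> Fr_rel X r \<and> (y, z) \<in> Fr_rel X r \<longrightarrow> (x, z) \<in> Fr_rel X r"
      using trFr by blast
  qed
  have monoFr: "(Fr_act act a x, Fr_act act a y) \<in> Fr_rel X r" if "(x, y) \<in> Fr_rel X r" for a x y
  proof -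
    have x: "x \<in> Fr X r" and y: "y \<in> Fr X r" and xy: "x \<subseteq> y"
      and lt: "\<forall>i\<in>x. \<forall>j\<in>y - x. (i, j) \<in> r \<and> i \<noteq> j"
      using that unfolding Fr_rel_def by auto
    have "\<forall>i'\<in>act a ` x. \<forall>j'\<in>act a ` y - act a ` x. (i', j') \<in> r \<and> i' \<noteq> j'"
    proof (intro ballI)
      fix i' j' assume i': "i' \<in> act a ` x" and j': "j' \<in> act a ` y - act a ` x"
      then obtain i j where ij: "i \<in> x" "i' = act a i" "j \<in> y" "j' = act a j" "j \<notin> x" by auto
      then have "(i, j) \<in> r" using lt by blast
      then have "(i', j') \<in> r" using ij mono by simp
      moreover have "j' \<notin> act a ` x" using j' by simp
      then have "i' \<noteq> j'" using i' by blast
      ultimately show "(i', j') \<in> r \<and> i' \<noteq> j'" by simp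
    qed
    moreover have "act a ` x \<subseteq> act a ` y" using xy by (rule image_mono)
    ultimately have "act a ` x \<in> Fr X r \<and> act a ` y \<in> Fr X r \<and> act a ` x \<subseteq> act a ` y \<and>
       (\<forall>i'\<in>act a ` x. \<forall>j'\<in>act a ` y - act a ` x. (i', j') \<in> r \<and> i' \<noteq> j')"
      using FrA[OF x, of a] FrA[OF y, of a] unfolding Fr_act_def by blast
    then show ?thesis unfolding Fr_rel_def Fr_act_def by (simp only: mem_Collect_eq case_prod_conv) blast
  qed
  have MFr: "M_partial_order (Fr X r) (Fr_rel X r) (Fr_act act)"
    unfolding M_partial_order_def using maFr poFr monoFr by blast
  have strong: "{Fr_act act a x | x. (x, y) \<in> Fr_rel X r} = {z \<in> Fr X r. (z, Fr_act act a y) \<in> Fr_rel X r}"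
    if y: "y \<in> Fr X r" for y a
  proof
    show "{Fr_act act a x | x. (x, y) \<in> Fr_rel X r} \<subseteq> {z \<in> Fr X r. (z, Fr_act act a y) \<in> Fr_rel X r}"
    proof
      fix w assume "w \<in> {Fr_act act a x | x. (x, y) \<in> Fr_rel X r}"
      then obtain x where w: "w = Fr_act act a x" and xy: "(x, y) \<in> Fr_rel X r" by blast
      have "x \<in> Fr X r" using xy unfolding Fr_rel_def by simp
      then have "w \<in> Fr X r" using FrA w by simp
      moreover have "(w, Fr_act act a y) \<in> Fr_rel X r" using monoFr[OF xy] w by simp
      ultimately show "w \<in> {z \<in> Fr X r. (z, Fr_act act a y) \<in> Fr_rel X r}" by simp
    qed
  next
    show "{z \<in> Fr X r. (z, Fr_act act a y) \<in> Fr_rel X r} \<subseteq> {Fr_act act a x | x. (x, y) \<in> Fr_rel X r}"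
    proof
      fix z assume "z \<in> {z \<in> Fr X r. (z, Fr_act act a y) \<in> Fr_rel X r}"
      then have z: "z \<in> Fr X r" and zs: "z \<subseteq> act a ` y"
        and lt: "\<forall>i\<in>z. \<forall>j\<in>act a ` y - z. (i, j) \<in> r \<and> i \<noteq> j"
        unfolding Fr_rel_def Fr_act_def by simp_all
      define x where "x = {i \<in> y. act a i \<in> z}"
      have ax: "act a ` x = z" using zs unfolding x_def by auto
      have yF: "y \<subseteq> X" "y \<noteq> {}" "\<forall>i\<in>y. \<forall>j\<in>y. (i, j) \<in> r \<or> (j, i) \<in> r"
        using y unfolding Fr_def by auto
      have xne: "x \<noteq> {}" using ax z unfolding Fr_def by auto
      have xF: "x \<in> Fr X r" using yF xne unfolding Fr_def x_def by auto
      have "\<forall>i\<in>x. \<forall>j\<in>y - x. (i, j) \<in> r \<and> i \<noteq> j"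
      proof (intro ballI)
        fix i j assume i: "i \<in> x" and j: "j \<in> y - x"
        have ij: "act a i \<in> z" "act a j \<in> act a ` y - z" using i j unfolding x_def by auto
        then have r1: "(act a i, act a j) \<in> r" "act a i \<noteq> act a j" using lt by auto
        have "(i, j) \<in> r \<or> (j, i) \<in> r" using yF i j unfolding x_def by auto
        moreover have "(j, i) \<notin> r"
        proof
          assume "(j, i) \<in> r"
          then have "(act a j, act a i) \<in> r" by (rule mono)
          then show False using r1 anti by auto
        qed
        ultimately show "(i, j) \<in> r \<and> i \<noteq> j" using r1 by auto
      qed
      moreover have "x \<subseteq> y" unfolding x_def by blast
      ultimately have "(x, y) \<in> Fr_rel X r" using xF y unfolding Fr_rel_def by simp
      then show "z \<in> {Fr_act act a x | x. (x, y) \<in> Fr_rel X r}"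
        using ax unfolding Fr_act_def by blast
    qed
  qed
  have sFr: "strong_M_partial_order (Fr X r) (Fr_rel X r) (Fr_act act)"
    unfolding strong_M_partial_order_def using MFr strong by blast
  have mp: "\<And>x. x \<in> Fr X r \<Longrightarrow> Fr_max r x \<in> x \<and> (\<forall>i\<in>x. (i, Fr_max r x) \<in> r)"
    using Fr_max_prop[OF po assms(1)] by blast
  have FrX: "\<And>x. x \<in> Fr X r \<Longrightarrow> x \<subseteq> X" unfolding Fr_def by auto
  have sing: "\<And>i. i \<in> X \<Longrightarrow> {i} \<in> Fr X r" unfolding Fr_def using refl by auto
  have img: "Fr_max r ` Fr X r = X"
  proof
    show "Fr_max r ` Fr X r \<subseteq> X" using mp FrX by blast
    show "X \<subseteq> Fr_max r ` Fr X r"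
    proof
      fix i assume i: "i \<in> X"
      have "Fr_max r {i} = i" using Fr_max_eq[OF po, of i "{i}"] refl i by auto
      then show "i \<in> Fr_max r ` Fr X r" using sing[OF i] by (metis imageI)
    qed
  qed
  have equi: "Fr_max r (Fr_act act a x) = act a (Fr_max r x)" if x: "x \<in> Fr X r" for a x
    using Fr_max_eq[OF po, of "act a (Fr_max r x)" "Fr_act act a x"] mp[OF x] mono
    unfolding Fr_act_def by auto
  have rel: "r = (\<lambda>(x, x'). (Fr_max r x, Fr_max r x')) ` Fr_rel X r"
  proof
    show "(\<lambda>(x, x'). (Fr_max r x, Fr_max r x')) ` Fr_rel X r \<subseteq> r"
    proof
      fix p assume "p \<in> (\<lambda>(x, x'). (Fr_max r x, Fr_max r x')) ` Fr_rel X r"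
      then obtain x y where p: "p = (Fr_max r x, Fr_max r y)" and xy: "(x, y) \<in> Fr_rel X r" by auto
      then have "x \<in> Fr X r" "y \<in> Fr X r" "x \<subseteq> y" unfolding Fr_rel_def by auto
      then show "p \<in> r" using mp p by blast
    qed
  next
    show "r \<subseteq> (\<lambda>(x, x'). (Fr_max r x, Fr_max r x')) ` Fr_rel X r"
    proof
      fix p assume p: "p \<in> r"
      then obtain i j where ij: "p = (i, j)" "(i, j) \<in> r" by (cases p) auto
      have X: "i \<in> X" "j \<in> X" using ij sub by auto
      have F: "{i, j} \<in> Fr X r" using X ij refl unfolding Fr_def by auto
      have m1: "Fr_max r {i} = i" using Fr_max_eq[OF po, of i "{i}"] refl X by auto
      have m2: "Fr_max r {i, j} = j" using Fr_max_eq[OF po, of j "{i, j}"] refl X ij by auto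
      have "({i}, {i, j}) \<in> Fr_rel X r" using sing[OF X(1)] F ij unfolding Fr_rel_def by auto
      then show "p \<in> (\<lambda>(x, x'). (Fr_max r x, Fr_max r x')) ` Fr_rel X r"
        using m1 m2 ij by (metis (no_types, lifting) case_prod_conv image_eqI)
    qed
  qed
  have "M_epimorphism (Fr X r) (Fr_rel X r) (Fr_act act) X r act (Fr_max r)"
    unfolding M_epimorphism_def using MFr assms(2) img equi rel by blast
  then show ?thesis using sFr by blast
qed

end
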